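(* Assume the stationary generator setting described in the context (for a process $(X_t)$ with memory $(R_t)$), and let $k\ge1$. Then $$H(R_k,X_{1:k})-H(R_0,X_{1:k})=I(R_0;X_{1:k})-I(R_k;X_{1:k})=\zeta_R(k)-I\big(\overleftarrow X;R_0\,\big|\,\overrightarrow X,R_k\big).$$
   Context: Stationary generator setting: $\mathcal X$ and $\mathcal R$ finite sets; $(X_t,R_t)_{t\in\mathbb Z}$ jointly stationary with $X_t\in\mathcal X$, $R_t\in\mathcal R$ (memory after $X_t$). Generator condition: for every $t$, $\big((X_s)_{s\le t},(R_s)_{s<t}\big)$ is conditionally independent of $\big((X_s)_{s>t},(R_s)_{s>t}\big)$ given $R_t$. Notation: $X_{a:b}=(X_a,\dots,X_b)$, $\overleftarrow X=(\dots,X_{-1},X_0)$, $\overrightarrow X=(X_1,X_2,\dots)$; information quantities with infinite sequences are limits of finite windows. Oracular information: $\zeta_R(k):=I(X_{1:k};R_0\mid\overleftarrow X)$. *)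

theory Defs
  imports "HOL-Probability.Probability"
begin

definition Ent :: "'w measure \<Rightarrow> real \<Rightarrow> ('w \<Rightarrow> 'a) \<Rightarrow> real" where
  "Ent M b Y = prob_space.entropy M b (count_space (Y ` space M)) Y"

definition MI :: "'w measure \<Rightarrow> real \<Rightarrow> ('w \<Rightarrow> 'a) \<Rightarrow> ('w \<Rightarrow> 'c) \<Rightarrow> real" where
  "MI M b Y Z = prob_space.mutual_information M b
      (count_space (Y ` space M)) (count_space (Z ` space M)) Y Z"

definition CMI :: "'w measure \<Rightarrow> real \<Rightarrow> ('w \<Rightarrow> 'a) \<Rightarrow> ('w \<Rightarrow> 'c) \<Rightarrow> ('w \<Rightarrow> 'd) \<Rightarrow> real" where
  "CMI M b Y Z W = prob_space.conditional_mutual_information M b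
      (count_space (Y ` space M)) (count_space (Z ` space M)) (count_space (W ` space M)) Y Z W"

text \<open>Finite window X_{a:b} = (X_a, ..., X_b) (empty if b < a).\<close>
definition win :: "(int \<Rightarrow> 'w \<Rightarrow> 'x) \<Rightarrow> int \<Rightarrow> int \<Rightarrow> 'w \<Rightarrow> 'x list" where
  "win X a b \<omega> = map (\<lambda>t. X t \<omega>) [a..b]"

definition cond_indep :: "'w measure \<Rightarrow> ('w \<Rightarrow> 'a) \<Rightarrow> ('w \<Rightarrow> 'c) \<Rightarrow> ('w \<Rightarrow> 'd) \<Rightarrow> bool" where
  "cond_indep M A B C \<longleftrightarrow> (\<forall>a b c.
     measure M {\<omega>\<in>space M. A \<omega> = a \<and> B \<omega> = b \<and> C \<omega> = c} * measure M {\<omega>\<in>space M. C \<omega> = c}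
   = measure M {\<omega>\<in>space M. A \<omega> = a \<and> C \<omega> = c} * measure M {\<omega>\<in>space M. B \<omega> = b \<and> C \<omega> = c})"

definition jointly_stationary :: "'w measure \<Rightarrow> (int \<Rightarrow> 'w \<Rightarrow> 'x) \<Rightarrow> (int \<Rightarrow> 'w \<Rightarrow> 'r) \<Rightarrow> bool" where
  "jointly_stationary M X R \<longleftrightarrow> (\<forall>a b s.
     distr M (count_space UNIV) (\<lambda>\<omega>. map (\<lambda>t. (X t \<omega>, R t \<omega>)) [a..b])
   = distr M (count_space UNIV) (\<lambda>\<omega>. map (\<lambda>t. (X (t + s) \<omega>, R (t + s) \<omega>)) [a..b]))"

text \<open>Generator condition: for every t, ((X_s)_{s<=t}, (R_s)_{s<t}) is conditionally
  independent of ((X_s)_{s>t}, (R_s)_{s>t}) given R_t; stated for all finite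
  sub-windows (equivalent to the statement for the infinite families).\<close>
definition generator :: "'w measure \<Rightarrow> (int \<Rightarrow> 'w \<Rightarrow> 'x) \<Rightarrow> (int \<Rightarrow> 'w \<Rightarrow> 'r) \<Rightarrow> bool" where
  "generator M X R \<longleftrightarrow> (\<forall>t. \<forall>n m :: nat.
     cond_indep M
       (\<lambda>\<omega>. (win X (t - int n) t \<omega>, win R (t - int n) (t - 1) \<omega>))
       (\<lambda>\<omega>. (win X (t + 1) (t + int m) \<omega>, win R (t + 1) (t + int m) \<omega>))
       (R t))"

text \<open>Oracular information zeta_R(k) = I(X_{1:k} ; R_0 | past X), the past being the
  limit of finite windows X_{-n+1:0}.\<close>
definition zeta :: "'w measure \<Rightarrow> real \<Rightarrow> (int \<Rightarrow> 'w \<Rightarrow> 'x) \<Rightarrow> (int \<Rightarrow> 'w \<Rightarrow> 'r) \<Rightarrow> nat \<Rightarrow> real" where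
  "zeta M b X R k = lim (\<lambda>n::nat. CMI M b (win X 1 (int k)) (R 0) (win X (1 - int n) 0))"

text \<open>I(past X ; R_0 | future X, R_k), as the joint limit of finite windows
  X_{-n+1:0} (past) and X_{1:m} (future).\<close>
definition past_R0_given_future_Rk ::
  "'w measure \<Rightarrow> real \<Rightarrow> (int \<Rightarrow> 'w \<Rightarrow> 'x) \<Rightarrow> (int \<Rightarrow> 'w \<Rightarrow> 'r) \<Rightarrow> nat \<Rightarrow> real" where
  "past_R0_given_future_Rk M b X R k = Lim (sequentially \<times>\<^sub>F sequentially)
     (\<lambda>(n::nat, m::nat). CMI M b (win X (1 - int n) 0) (R 0)
                            (\<lambda>\<omega>. (win X 1 (int m) \<omega>, R (int k) \<omega>)))"

end

theory Submission
  imports Defs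
begin

definition (in prob_space) pv :: "('a \<Rightarrow> 'b) \<Rightarrow> 'a \<Rightarrow> real" where
  "pv V \<omega> = prob {w \<in> space M. V w = V \<omega>}"

context information_space
begin

lemma sf_pv: assumes "simple_function M V" shows "simple_function M (\<lambda>\<omega>. g (pv V \<omega>))"
proof -
  have "simple_function M ((\<lambda>y. g (prob (V -` {y} \<inter> space M))) \<circ> V)"
    using assms by (rule simple_function_compose)
  then show ?thesis
    by (rule simple_function_cong[THEN iffD1, rotated])
       (auto simp: pv_def intro!: arg_cong[where f=g] arg_cong[where f=prob])
qed

lemma int_pv: assumes "simple_function M V" shows "integrable M (\<lambda>\<omega>. g (pv V \<omega>) :: real)"
  using sf_pv[OF assms]
  by (intro integrable_simple_function) (auto simp: )

lemma Ent_eq: assumes sf: "simple_function M V"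
  shows "Ent M b V = - expectation (\<lambda>\<omega>. log b (pv V \<omega>))"
proof -
  let ?f = "\<lambda>x. prob (V -` {x} \<inter> space M)"
  have sd: "simple_distributed M V ?f"
    by (rule simple_distributedI[OF sf measure_nonneg refl])
  have "Ent M b V = - (\<Sum>x\<in>V`space M. ?f x * log b (?f x))"
    unfolding Ent_def using entropy_simple_distributed[OF sd] by simp
  also have "(\<Sum>x\<in>V`space M. ?f x * log b (?f x)) = (\<integral>x. ?f x * log b (?f x) \<partial>count_space (V`space M))"
    using sf by (simp add: lebesgue_integral_count_space_finite simple_functionD)
  also have "\<dots> = expectation (\<lambda>\<omega>. log b (?f (V \<omega>)))"
    by (rule distributed_integral[OF simple_distributed[OF sd]]) (auto simp: measure_nonneg)
  also have "\<dots> = expectation (\<lambda>\<omega>. log b (pv V \<omega>))"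
    by (rule Bochner_Integration.integral_cong) (auto simp: pv_def vimage_def Int_def conj_commute)
  finally show ?thesis .
qed

lemma AE_pv_pos: assumes sf: "simple_function M V" shows "AE \<omega> in M. 0 < pv V \<omega>"
proof -
  have fin: "finite (V ` space M)" using sf by (rule simple_functionD)
  have "AE \<omega> in M. \<forall>y\<in>{y\<in>V`space M. prob (V -` {y} \<inter> space M) = 0}. V \<omega> \<noteq> y"
  proof (subst AE_finite_all)
    show "finite {y\<in>V`space M. prob (V -` {y} \<inter> space M) = 0}" using fin by simp
    show "\<forall>y\<in>{y\<in>V`space M. prob (V -` {y} \<inter> space M) = 0}. AE \<omega> in M. V \<omega> \<noteq> y"
    proof
      fix y assume y: "y \<in> {y\<in>V`space M. prob (V -` {y} \<inter> space M) = 0}"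
      have meas: "V -` {y} \<inter> space M \<in> sets M" using sf y by (auto simp: simple_function_def)
      show "AE \<omega> in M. V \<omega> \<noteq> y"
        by (rule AE_I[of _ _ "V -` {y} \<inter> space M"]) (use y meas in \<open>auto simp: emeasure_eq_measure\<close>)
    qed
  qed
  then show ?thesis
  proof (rule AE_mp, intro AE_I2 impI)
    fix \<omega> assume \<omega>: "\<omega> \<in> space M" and h: "\<forall>y\<in>{y\<in>V`space M. prob (V -` {y} \<inter> space M) = 0}. V \<omega> \<noteq> y"
    have eq: "{w \<in> space M. V w = V \<omega>} = V -` {V \<omega>} \<inter> space M" by auto
    have "prob (V -` {V \<omega>} \<inter> space M) \<noteq> 0" using h \<omega> by auto
    then show "0 < pv V \<omega>" unfolding pv_def eq using measure_nonneg[of M] by (simp add: less_le)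
  qed
qed

lemma Ent_relabel:
  assumes "simple_function M V" "simple_function M W"
    and "\<And>\<omega> \<omega>'. \<omega> \<in> space M \<Longrightarrow> \<omega>' \<in> space M \<Longrightarrow> V \<omega> = V \<omega>' \<longleftrightarrow> W \<omega> = W \<omega>'"
  shows "Ent M b V = Ent M b W"
proof -
  have "\<And>\<omega>. \<omega> \<in> space M \<Longrightarrow> pv V \<omega> = pv W \<omega>"
    unfolding pv_def using assms(3) by (intro arg_cong[where f=prob]) (auto simp: eq_commute)
  then show ?thesis
    unfolding Ent_eq[OF assms(1)] Ent_eq[OF assms(2)]
    by (intro arg_cong[where f=uminus] Bochner_Integration.integral_cong) auto
qed



lemma pv_vimage: "\<omega> \<in> space M \<Longrightarrow> prob (V -` {V \<omega>} \<inter> space M) = pv V \<omega>"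
  unfolding pv_def by (auto intro!: arg_cong[where f=prob])

lemma MI_ent: assumes Y: "simple_function M Y" and Z: "simple_function M Z"
  shows "MI M b Y Z = Ent M b Y + Ent M b Z - Ent M b (\<lambda>\<omega>. (Y \<omega>, Z \<omega>))"
proof -
  note YZ = simple_function_Pair[OF Y Z]
  let ?Px = "\<lambda>x. prob (Y -` {x} \<inter> space M)"
  let ?Py = "\<lambda>x. prob (Z -` {x} \<inter> space M)"
  let ?Pxy = "\<lambda>x. prob ((\<lambda>\<omega>. (Y \<omega>, Z \<omega>)) -` {x} \<inter> space M)"
  have sx: "simple_distributed M Y ?Px" by (rule simple_distributedI[OF Y measure_nonneg refl])
  have sy: "simple_distributed M Z ?Py" by (rule simple_distributedI[OF Z measure_nonneg refl])
  have sxy: "simple_distributed M (\<lambda>\<omega>. (Y \<omega>, Z \<omega>)) ?Pxy" by (rule simple_distributedI[OF YZ measure_nonneg refl])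
  let ?g = "\<lambda>t. log b (?Pxy t / (?Px (fst t) * ?Py (snd t)))"
  have "MI M b Y Z = (\<Sum>t\<in>(\<lambda>\<omega>. (Y \<omega>, Z \<omega>))`space M. ?Pxy t * ?g t)"
    unfolding MI_def using mutual_information_simple_distributed[OF sx sy sxy]
    by (simp add: split_beta')
  also have "\<dots> = (\<integral>t. ?Pxy t * ?g t \<partial>count_space ((\<lambda>\<omega>. (Y \<omega>, Z \<omega>))`space M))"
    using YZ by (simp add: lebesgue_integral_count_space_finite simple_functionD)
  also have "\<dots> = expectation (\<lambda>\<omega>. ?g (Y \<omega>, Z \<omega>))"
    by (rule distributed_integral[OF simple_distributed[OF sxy]]) (auto simp: measure_nonneg)
  also have "\<dots> = expectation (\<lambda>\<omega>. log b (pv (\<lambda>\<omega>. (Y \<omega>, Z \<omega>)) \<omega>) - log b (pv Y \<omega>) - log b (pv Z \<omega>))"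
  proof (rule integral_cong_AE)
    show "(\<lambda>\<omega>. ?g (Y \<omega>, Z \<omega>)) \<in> borel_measurable M"
      using YZ by (intro borel_measurable_simple_function simple_function_compose[of _ _ ?g, unfolded o_def]) 
    show "(\<lambda>\<omega>. log b (pv (\<lambda>\<omega>. (Y \<omega>, Z \<omega>)) \<omega>) - log b (pv Y \<omega>) - log b (pv Z \<omega>)) \<in> borel_measurable M"
      using sf_pv[OF YZ] sf_pv[OF Y] sf_pv[OF Z] by (intro borel_measurable_diff borel_measurable_simple_function) auto
    show "AE \<omega> in M. ?g (Y \<omega>, Z \<omega>) = log b (pv (\<lambda>\<omega>. (Y \<omega>, Z \<omega>)) \<omega>) - log b (pv Y \<omega>) - log b (pv Z \<omega>)"
      using AE_pv_pos[OF YZ] AE_pv_pos[OF Y] AE_pv_pos[OF Z] AE_space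
    proof eventually_elim
      case (elim \<omega>)
      have e1: "?Pxy (Y \<omega>, Z \<omega>) = pv (\<lambda>\<omega>. (Y \<omega>, Z \<omega>)) \<omega>" using pv_vimage[OF elim(4), of "\<lambda>\<omega>. (Y \<omega>, Z \<omega>)"] by simp
      have e2: "?Px (Y \<omega>) = pv Y \<omega>" using pv_vimage[OF elim(4), of Y] by simp
      have e3: "?Py (Z \<omega>) = pv Z \<omega>" using pv_vimage[OF elim(4), of Z] by simp
      show ?case using elim by (simp add: e1 e2 e3 log_divide log_mult)
    qed
  qed
  also have "\<dots> = expectation (\<lambda>\<omega>. log b (pv (\<lambda>\<omega>. (Y \<omega>, Z \<omega>)) \<omega>)) - expectation (\<lambda>\<omega>. log b (pv Y \<omega>)) - expectation (\<lambda>\<omega>. log b (pv Z \<omega>))"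
    using int_pv[OF YZ] int_pv[OF Y] int_pv[OF Z] by simp
  finally show ?thesis unfolding Ent_eq[OF Y] Ent_eq[OF Z] Ent_eq[OF YZ] by simp
qed


lemma CMI_ent: assumes A: "simple_function M A" and B: "simple_function M B" and C: "simple_function M C"
  shows "CMI M b A B C = Ent M b (\<lambda>\<omega>. (A \<omega>, C \<omega>)) + Ent M b (\<lambda>\<omega>. (B \<omega>, C \<omega>))
      - Ent M b (\<lambda>\<omega>. (A \<omega>, B \<omega>, C \<omega>)) - Ent M b C"
proof -
  note AC = simple_function_Pair[OF A C]
  note BC = simple_function_Pair[OF B C]
  note ABC = simple_function_Pair[OF A simple_function_Pair[OF B C]]
  let ?Pz = "\<lambda>x. prob (C -` {x} \<inter> space M)"
  let ?Pyz = "\<lambda>x. prob ((\<lambda>\<omega>. (B \<omega>, C \<omega>)) -` {x} \<inter> space M)"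
  let ?Pxz = "\<lambda>x. prob ((\<lambda>\<omega>. (A \<omega>, C \<omega>)) -` {x} \<inter> space M)"
  let ?Pxyz = "\<lambda>x. prob ((\<lambda>\<omega>. (A \<omega>, B \<omega>, C \<omega>)) -` {x} \<inter> space M)"
  have sz: "simple_distributed M C ?Pz" by (rule simple_distributedI[OF C measure_nonneg refl])
  have syz: "simple_distributed M (\<lambda>\<omega>. (B \<omega>, C \<omega>)) ?Pyz" by (rule simple_distributedI[OF BC measure_nonneg refl])
  have sxz: "simple_distributed M (\<lambda>\<omega>. (A \<omega>, C \<omega>)) ?Pxz" by (rule simple_distributedI[OF AC measure_nonneg refl])
  have sxyz: "simple_distributed M (\<lambda>\<omega>. (A \<omega>, B \<omega>, C \<omega>)) ?Pxyz" by (rule simple_distributedI[OF ABC measure_nonneg refl])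
  let ?g = "\<lambda>t. log b (?Pxyz t / (?Pxz (fst t, snd (snd t)) * (?Pyz (snd t) / ?Pz (snd (snd t)))))"
  have "CMI M b A B C = (\<Sum>t\<in>(\<lambda>\<omega>. (A \<omega>, B \<omega>, C \<omega>))`space M. ?Pxyz t * ?g t)"
    unfolding CMI_def using conditional_mutual_information_eq[OF sz syz sxz sxyz]
    by (simp add: split_beta')
  also have "\<dots> = (\<integral>t. ?Pxyz t * ?g t \<partial>count_space ((\<lambda>\<omega>. (A \<omega>, B \<omega>, C \<omega>))`space M))"
    using ABC by (simp add: lebesgue_integral_count_space_finite simple_functionD)
  also have "\<dots> = expectation (\<lambda>\<omega>. ?g (A \<omega>, B \<omega>, C \<omega>))"
    by (rule distributed_integral[OF simple_distributed[OF sxyz]]) (auto simp: measure_nonneg)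
  also have "\<dots> = expectation (\<lambda>\<omega>. log b (pv (\<lambda>\<omega>. (A \<omega>, B \<omega>, C \<omega>)) \<omega>) - log b (pv (\<lambda>\<omega>. (A \<omega>, C \<omega>)) \<omega>)
        - log b (pv (\<lambda>\<omega>. (B \<omega>, C \<omega>)) \<omega>) + log b (pv C \<omega>))"
  proof (rule integral_cong_AE)
    show "(\<lambda>\<omega>. ?g (A \<omega>, B \<omega>, C \<omega>)) \<in> borel_measurable M"
      using ABC by (intro borel_measurable_simple_function simple_function_compose[of _ _ ?g, unfolded o_def]) 
    show "(\<lambda>\<omega>. log b (pv (\<lambda>\<omega>. (A \<omega>, B \<omega>, C \<omega>)) \<omega>) - log b (pv (\<lambda>\<omega>. (A \<omega>, C \<omega>)) \<omega>)
        - log b (pv (\<lambda>\<omega>. (B \<omega>, C \<omega>)) \<omega>) + log b (pv C \<omega>)) \<in> borel_measurable M"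
      using sf_pv[OF ABC] sf_pv[OF AC] sf_pv[OF BC] sf_pv[OF C]
      by (intro borel_measurable_diff borel_measurable_add borel_measurable_simple_function) auto
    show "AE \<omega> in M. ?g (A \<omega>, B \<omega>, C \<omega>) = log b (pv (\<lambda>\<omega>. (A \<omega>, B \<omega>, C \<omega>)) \<omega>) - log b (pv (\<lambda>\<omega>. (A \<omega>, C \<omega>)) \<omega>)
        - log b (pv (\<lambda>\<omega>. (B \<omega>, C \<omega>)) \<omega>) + log b (pv C \<omega>)"
      using AE_pv_pos[OF ABC] AE_pv_pos[OF AC] AE_pv_pos[OF BC] AE_pv_pos[OF C] AE_space
    proof eventually_elim
      case (elim \<omega>)
      have e1: "?Pxyz (A \<omega>, B \<omega>, C \<omega>) = pv (\<lambda>\<omega>. (A \<omega>, B \<omega>, C \<omega>)) \<omega>"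
        using pv_vimage[OF elim(5), of "\<lambda>\<omega>. (A \<omega>, B \<omega>, C \<omega>)"] by simp
      have e2: "?Pxz (A \<omega>, C \<omega>) = pv (\<lambda>\<omega>. (A \<omega>, C \<omega>)) \<omega>"
        using pv_vimage[OF elim(5), of "\<lambda>\<omega>. (A \<omega>, C \<omega>)"] by simp
      have e3: "?Pyz (B \<omega>, C \<omega>) = pv (\<lambda>\<omega>. (B \<omega>, C \<omega>)) \<omega>"
        using pv_vimage[OF elim(5), of "\<lambda>\<omega>. (B \<omega>, C \<omega>)"] by simp
      have e4: "?Pz (C \<omega>) = pv C \<omega>" using pv_vimage[OF elim(5), of C] by simp
      show ?case using elim by (simp add: e1 e2 e3 e4 log_divide log_mult)
    qed
  qed
  also have "\<dots> = expectation (\<lambda>\<omega>. log b (pv (\<lambda>\<omega>. (A \<omega>, B \<omega>, C \<omega>)) \<omega>)) - expectation (\<lambda>\<omega>. log b (pv (\<lambda>\<omega>. (A \<omega>, C \<omega>)) \<omega>))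
        - expectation (\<lambda>\<omega>. log b (pv (\<lambda>\<omega>. (B \<omega>, C \<omega>)) \<omega>)) + expectation (\<lambda>\<omega>. log b (pv C \<omega>))"
    using int_pv[OF ABC] int_pv[OF AC] int_pv[OF BC] int_pv[OF C] by simp
  finally show ?thesis unfolding Ent_eq[OF AC] Ent_eq[OF BC] Ent_eq[OF ABC] Ent_eq[OF C] by simp
qed

lemma CMI_nonneg: assumes A: "simple_function M A" and B: "simple_function M B" and C: "simple_function M C"
  shows "0 \<le> Ent M b (\<lambda>\<omega>. (A \<omega>, C \<omega>)) + Ent M b (\<lambda>\<omega>. (B \<omega>, C \<omega>))
      - Ent M b (\<lambda>\<omega>. (A \<omega>, B \<omega>, C \<omega>)) - Ent M b C"
  using conditional_mutual_information_nonneg[OF A B C] CMI_ent[OF A B C] unfolding CMI_def by simp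

lemma CI_ent: assumes A: "simple_function M A" and B: "simple_function M B" and C: "simple_function M C"
  and ci: "cond_indep M A B C"
  shows "Ent M b (\<lambda>\<omega>. (A \<omega>, C \<omega>)) + Ent M b (\<lambda>\<omega>. (B \<omega>, C \<omega>))
      - Ent M b (\<lambda>\<omega>. (A \<omega>, B \<omega>, C \<omega>)) - Ent M b C = 0"
proof -
  note AC = simple_function_Pair[OF A C]
  note BC = simple_function_Pair[OF B C]
  note ABC = simple_function_Pair[OF A simple_function_Pair[OF B C]]
  have "expectation (\<lambda>\<omega>. log b (pv (\<lambda>\<omega>. (A \<omega>, B \<omega>, C \<omega>)) \<omega>) - log b (pv (\<lambda>\<omega>. (A \<omega>, C \<omega>)) \<omega>)
        - log b (pv (\<lambda>\<omega>. (B \<omega>, C \<omega>)) \<omega>) + log b (pv C \<omega>)) = expectation (\<lambda>\<omega>. 0)"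
  proof (rule integral_cong_AE)
    show "(\<lambda>\<omega>. log b (pv (\<lambda>\<omega>. (A \<omega>, B \<omega>, C \<omega>)) \<omega>) - log b (pv (\<lambda>\<omega>. (A \<omega>, C \<omega>)) \<omega>)
        - log b (pv (\<lambda>\<omega>. (B \<omega>, C \<omega>)) \<omega>) + log b (pv C \<omega>)) \<in> borel_measurable M"
      using sf_pv[OF ABC] sf_pv[OF AC] sf_pv[OF BC] sf_pv[OF C]
      by (intro borel_measurable_diff borel_measurable_add borel_measurable_simple_function) auto
    show "AE \<omega> in M. log b (pv (\<lambda>\<omega>. (A \<omega>, B \<omega>, C \<omega>)) \<omega>) - log b (pv (\<lambda>\<omega>. (A \<omega>, C \<omega>)) \<omega>)
        - log b (pv (\<lambda>\<omega>. (B \<omega>, C \<omega>)) \<omega>) + log b (pv C \<omega>) = 0"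
      using AE_pv_pos[OF ABC] AE_pv_pos[OF AC] AE_pv_pos[OF BC] AE_pv_pos[OF C] AE_space
    proof eventually_elim
      case (elim \<omega>)
      have "pv (\<lambda>\<omega>. (A \<omega>, B \<omega>, C \<omega>)) \<omega> * pv C \<omega> = pv (\<lambda>\<omega>. (A \<omega>, C \<omega>)) \<omega> * pv (\<lambda>\<omega>. (B \<omega>, C \<omega>)) \<omega>"
        using ci unfolding cond_indep_def pv_def by simp
      then have "log b (pv (\<lambda>\<omega>. (A \<omega>, B \<omega>, C \<omega>)) \<omega> * pv C \<omega>) = log b (pv (\<lambda>\<omega>. (A \<omega>, C \<omega>)) \<omega> * pv (\<lambda>\<omega>. (B \<omega>, C \<omega>)) \<omega>)"
        by simp
      then show ?case using elim by (simp add: log_mult)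
    qed
  qed simp
  then have "expectation (\<lambda>\<omega>. log b (pv (\<lambda>\<omega>. (A \<omega>, B \<omega>, C \<omega>)) \<omega>)) - expectation (\<lambda>\<omega>. log b (pv (\<lambda>\<omega>. (A \<omega>, C \<omega>)) \<omega>))
        - expectation (\<lambda>\<omega>. log b (pv (\<lambda>\<omega>. (B \<omega>, C \<omega>)) \<omega>)) + expectation (\<lambda>\<omega>. log b (pv C \<omega>)) = 0"
    using int_pv[OF ABC] int_pv[OF AC] int_pv[OF BC] int_pv[OF C] by simp
  then show ?thesis unfolding Ent_eq[OF AC] Ent_eq[OF BC] Ent_eq[OF ABC] Ent_eq[OF C] by simp
qed


lemma Ent_distr_eq:
  assumes Z: "Z \<in> measurable M (count_space UNIV)" and Z': "Z' \<in> measurable M (count_space UNIV)"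
    and D: "distr M (count_space UNIV) Z = distr M (count_space UNIV) Z'"
    and sf: "simple_function M (\<lambda>\<omega>. g (Z \<omega>))" and sf': "simple_function M (\<lambda>\<omega>. g (Z' \<omega>))"
  shows "Ent M b (\<lambda>\<omega>. g (Z \<omega>)) = Ent M b (\<lambda>\<omega>. g (Z' \<omega>))"
proof -
  let ?D = "distr M (count_space UNIV) Z"
  let ?h = "\<lambda>z. log b (measure ?D (g -` {g z}))"
  have key: "Ent M b (\<lambda>\<omega>. g (Y \<omega>)) = - integral\<^sup>L (distr M (count_space UNIV) Y) (\<lambda>z. log b (measure (distr M (count_space UNIV) Y) (g -` {g z})))"
    if Y: "Y \<in> measurable M (count_space UNIV)" and sfY: "simple_function M (\<lambda>\<omega>. g (Y \<omega>))" for Y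
  proof -
    have "expectation (\<lambda>\<omega>. log b (pv (\<lambda>\<omega>. g (Y \<omega>)) \<omega>)) =
        expectation (\<lambda>\<omega>. log b (measure (distr M (count_space UNIV) Y) (g -` {g (Y \<omega>)})))"
      by (rule Bochner_Integration.integral_cong)
         (auto simp: pv_def measure_distr[OF Y] intro!: arg_cong[where f="\<lambda>A. log b (prob A)"])
    also have "\<dots> = integral\<^sup>L (distr M (count_space UNIV) Y) (\<lambda>z. log b (measure (distr M (count_space UNIV) Y) (g -` {g z})))"
      by (rule integral_distr[symmetric, OF Y]) (simp add: measurable_count_space_eq1)
    finally show ?thesis unfolding Ent_eq[OF sfY] by simp
  qed
  show ?thesis unfolding key[OF Z sf] key[OF Z' sf'] D ..
qed

end

definition cE :: "'w measure \<Rightarrow> real \<Rightarrow> ('w \<Rightarrow> 'a) \<Rightarrow> ('w \<Rightarrow> 'c) \<Rightarrow> ('w \<Rightarrow> 'd) \<Rightarrow> real" where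
  "cE M b A B C = Ent M b (\<lambda>\<omega>. (A \<omega>, C \<omega>)) + Ent M b (\<lambda>\<omega>. (B \<omega>, C \<omega>))
      - Ent M b (\<lambda>\<omega>. (A \<omega>, B \<omega>, C \<omega>)) - Ent M b C"

context information_space begin

lemma cE_nonneg: "simple_function M A \<Longrightarrow> simple_function M B \<Longrightarrow> simple_function M C \<Longrightarrow> 0 \<le> cE M b A B C"
  unfolding cE_def by (rule CMI_nonneg)

lemma cE_sym: assumes "simple_function M A" "simple_function M B" "simple_function M C"
  shows "cE M b A B C = cE M b B A C"
proof -
  have "Ent M b (\<lambda>\<omega>. (A \<omega>, B \<omega>, C \<omega>)) = Ent M b (\<lambda>\<omega>. (B \<omega>, A \<omega>, C \<omega>))"
    by (rule Ent_relabel) (use assms in auto)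
  then show ?thesis unfolding cE_def by simp
qed

lemma cE_dp: assumes A: "simple_function M A" and A': "simple_function M A'"
   and B: "simple_function M B" and C: "simple_function M C"
   and det: "\<And>\<omega> \<omega>'. \<omega> \<in> space M \<Longrightarrow> \<omega>' \<in> space M \<Longrightarrow> A \<omega> = A \<omega>' \<Longrightarrow> A' \<omega> = A' \<omega>'"
  shows "cE M b A' B C \<le> cE M b A B C"
proof -
  have CA': "simple_function M (\<lambda>\<omega>. (C \<omega>, A' \<omega>))" using C A' by auto
  have nn: "0 \<le> cE M b A B (\<lambda>\<omega>. (C \<omega>, A' \<omega>))" by (rule cE_nonneg[OF A B CA'])
  have e1: "Ent M b (\<lambda>\<omega>. (A \<omega>, C \<omega>, A' \<omega>)) = Ent M b (\<lambda>\<omega>. (A \<omega>, C \<omega>))"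
    (is "Ent M b ?L = Ent M b ?R")
  proof (rule Ent_relabel)
    fix \<omega> \<omega>' assume "\<omega> \<in> space M" "\<omega>' \<in> space M"
    then show "?L \<omega> = ?L \<omega>' \<longleftrightarrow> ?R \<omega> = ?R \<omega>'" using det[of \<omega> \<omega>'] by auto
  qed (use A A' B C in auto)
  have e2: "Ent M b (\<lambda>\<omega>. (A \<omega>, B \<omega>, C \<omega>, A' \<omega>)) = Ent M b (\<lambda>\<omega>. (A \<omega>, B \<omega>, C \<omega>))"
    (is "Ent M b ?L = Ent M b ?R")
  proof (rule Ent_relabel)
    fix \<omega> \<omega>' assume "\<omega> \<in> space M" "\<omega>' \<in> space M"
    then show "?L \<omega> = ?L \<omega>' \<longleftrightarrow> ?R \<omega> = ?R \<omega>'" using det[of \<omega> \<omega>'] by auto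
  qed (use A A' B C in auto)
  have e3: "Ent M b (\<lambda>\<omega>. (B \<omega>, C \<omega>, A' \<omega>)) = Ent M b (\<lambda>\<omega>. (A' \<omega>, B \<omega>, C \<omega>))"
    by (rule Ent_relabel) (use A A' B C in \<open>auto\<close>)
  have e4: "Ent M b (\<lambda>\<omega>. (C \<omega>, A' \<omega>)) = Ent M b (\<lambda>\<omega>. (A' \<omega>, C \<omega>))"
    by (rule Ent_relabel) (use A A' B C in \<open>auto\<close>)
  show ?thesis using nn unfolding cE_def e1 e2 e3 e4 by simp
qed

lemma cE_zero: assumes A: "simple_function M A" and A': "simple_function M A'"
   and B: "simple_function M B" and B': "simple_function M B'" and C: "simple_function M C"
   and detA: "\<And>\<omega> \<omega>'. \<omega> \<in> space M \<Longrightarrow> \<omega>' \<in> space M \<Longrightarrow> A \<omega> = A \<omega>' \<Longrightarrow> A' \<omega> = A' \<omega>'"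
   and detB: "\<And>\<omega> \<omega>'. \<omega> \<in> space M \<Longrightarrow> \<omega>' \<in> space M \<Longrightarrow> B \<omega> = B \<omega>' \<Longrightarrow> B' \<omega> = B' \<omega>'"
   and z: "cE M b A B C = 0"
  shows "cE M b A' B' C = 0"
proof -
  have "cE M b A' B C \<le> cE M b A B C" by (rule cE_dp[OF A A' B C detA])
  moreover have "cE M b A' B' C = cE M b B' A' C" by (rule cE_sym[OF A' B' C])
  moreover have "cE M b B' A' C \<le> cE M b B A' C" by (rule cE_dp[OF B B' A' C detB])
  moreover have "cE M b B A' C = cE M b A' B C" by (rule cE_sym[OF B A' C])
  moreover have "0 \<le> cE M b A' B' C" by (rule cE_nonneg[OF A' B' C])
  ultimately show ?thesis using z by linarith
qed

end

lemma win_eq_iff: "win X a b \<omega> = win X a b \<omega>' \<longleftrightarrow> (\<forall>t. a \<le> t \<and> t \<le> b \<longrightarrow> X t \<omega> = X t \<omega>')"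
  unfolding win_def by (auto simp: map_eq_conv)

lemma sf_map: assumes "\<And>t. simple_function M (Y t)"
  shows "simple_function M (\<lambda>\<omega>. map (\<lambda>t. Y t \<omega>) ts)"
proof (induction ts)
  case Nil then show ?case by simp
next
  case (Cons t ts)
  have "simple_function M ((\<lambda>p. fst p # snd p) \<circ> (\<lambda>\<omega>. (Y t \<omega>, map (\<lambda>t. Y t \<omega>) ts)))"
    using assms Cons by (intro simple_function_compose simple_function_Pair)
  then show ?case by (simp add: o_def)
qed

lemma sf_fin: assumes "f \<in> measurable M (count_space UNIV)" shows "simple_function M (f :: _ \<Rightarrow> 'z::finite)"
  using assms by (simp add: simple_function_eq_measurable)

lemma map_shift: "map (\<lambda>t. f (t + s)) [a..b] = map f [a+s..b+(s::int)]"
proof (induction a b rule: upto.induct)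
  case (1 i j)
  show ?case
  proof (cases "i \<le> j")
    case True
    then have "[i..j] = i # [i+1..j]" "[i+s..j+s] = (i+s) # [i+s+1..j+s]" by (simp_all add: upto_rec1)
    with 1 True show ?thesis by (simp add: algebra_simps)
  next
    case False then show ?thesis by simp
  qed
qed


lemma win_split:
  assumes "m \<le> c" "a \<le> m + 1"
  shows "(win X a c \<omega> = win X a c \<omega>') = (win X a m \<omega> = win X a m \<omega>' \<and> win X (m+1) c \<omega> = win X (m+1) c \<omega>')"
proof
  assume "win X a c \<omega> = win X a c \<omega>'"
  then show "win X a m \<omega> = win X a m \<omega>' \<and> win X (m+1) c \<omega> = win X (m+1) c \<omega>'"
    using assms unfolding win_eq_iff by auto
next
  assume h: "win X a m \<omega> = win X a m \<omega>' \<and> win X (m+1) c \<omega> = win X (m+1) c \<omega>'"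
  show "win X a c \<omega> = win X a c \<omega>'"
    unfolding win_eq_iff
  proof (intro allI impI)
    fix t assume t: "a \<le> t \<and> t \<le> c"
    show "X t \<omega> = X t \<omega>'"
    proof (cases "t \<le> m")
      case True then show ?thesis using h t unfolding win_eq_iff by auto
    next
      case False then show ?thesis using h t unfolding win_eq_iff by auto
    qed
  qed
qed

lemma last_map_upto: "a \<le> c \<Longrightarrow> last (map f [a..c]) = f c"
  by (simp add: upto_rec2)

lemma (in information_space) stat:
  fixes X :: "int \<Rightarrow> 'a \<Rightarrow> 'x::finite" and R :: "int \<Rightarrow> 'a \<Rightarrow> 'r::finite"
  assumes js: "jointly_stationary M X R" and mX: "\<And>t. X t \<in> measurable M (count_space UNIV)"
    and mR: "\<And>t. R t \<in> measurable M (count_space UNIV)"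
  shows "Ent M b (\<lambda>\<omega>. g (map (\<lambda>t. (X t \<omega>, R t \<omega>)) [a..c])) = Ent M b (\<lambda>\<omega>. g (map (\<lambda>t. (X t \<omega>, R t \<omega>)) [a+s..c+s]))"
proof -
  have sfXR: "\<And>t. simple_function M (\<lambda>\<omega>. (X t \<omega>, R t \<omega>))"
    using sf_fin[OF mX] sf_fin[OF mR] by auto
  let ?Z = "\<lambda>\<omega>. map (\<lambda>t. (X t \<omega>, R t \<omega>)) [a..c]"
  let ?Z' = "\<lambda>\<omega>. map (\<lambda>t. (X (t+s) \<omega>, R (t+s) \<omega>)) [a..c]"
  have sZ: "simple_function M ?Z" by (rule sf_map[OF sfXR])
  have sZ': "simple_function M ?Z'" using sf_map[of M "\<lambda>t \<omega>. (X (t+s) \<omega>, R (t+s) \<omega>)"] sfXR by auto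
  have "Ent M b (\<lambda>\<omega>. g (?Z \<omega>)) = Ent M b (\<lambda>\<omega>. g (?Z' \<omega>))"
  proof (rule Ent_distr_eq[where g=g and Z="?Z" and Z'="?Z'"])
    show "?Z \<in> measurable M (count_space UNIV)" "?Z' \<in> measurable M (count_space UNIV)"
      using sZ sZ' by (simp_all add: simple_function_eq_measurable)
    show "distr M (count_space UNIV) ?Z = distr M (count_space UNIV) ?Z'"
      using js unfolding jointly_stationary_def by blast
    show "simple_function M (\<lambda>\<omega>. g (?Z \<omega>))" using simple_function_compose[OF sZ, of g] by (simp add: o_def)
    show "simple_function M (\<lambda>\<omega>. g (?Z' \<omega>))" using simple_function_compose[OF sZ', of g] by (simp add: o_def)
  qed
  moreover have "\<And>\<omega>. ?Z' \<omega> = map (\<lambda>t. (X t \<omega>, R t \<omega>)) [a+s..c+s]"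
  proof -
    fix \<omega> show "?Z' \<omega> = map (\<lambda>t. (X t \<omega>, R t \<omega>)) [a+s..c+s]"
      using map_shift[of "\<lambda>t. (X t \<omega>, R t \<omega>)" s a c] by simp
  qed
  ultimately show ?thesis by presburger
qed


lemma win_sub: "a \<le> a' \<Longrightarrow> c' \<le> c \<Longrightarrow> win X a c \<omega> = win X a c \<omega>' \<Longrightarrow> win X a' c' \<omega> = win X a' c' \<omega>'"
  by (auto simp: win_eq_iff)

lemma win_pt: "a \<le> t \<Longrightarrow> t \<le> c \<Longrightarrow> win X a c \<omega> = win X a c \<omega>' \<Longrightarrow> X t \<omega> = X t \<omega>'"
  by (auto simp: win_eq_iff)

lemma win_single: "(win X a a \<omega> = win X a a \<omega>') = (X a \<omega> = X a \<omega>')"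
  by (simp add: win_def)

lemma (in information_space) cond_mono:
  assumes sfU: "simple_function M U" and sfW: "\<And>a c. simple_function M (win X a c)"
    and sfX: "\<And>t. simple_function M (X t)"
  shows "Ent M b (\<lambda>\<omega>. (U \<omega>, win X (- int n) 0 \<omega>)) - Ent M b (win X (- int n) 0)
      \<le> Ent M b (\<lambda>\<omega>. (U \<omega>, win X (1 - int n) 0 \<omega>)) - Ent M b (win X (1 - int n) 0)"
proof -
  let ?P = "win X (1 - int n) 0" and ?P' = "win X (- int n) 0" and ?x = "X (- int n)"
  have split: "(?P' \<omega> = ?P' \<omega>') = (?x \<omega> = ?x \<omega>' \<and> ?P \<omega> = ?P \<omega>')" for \<omega> \<omega>'
    using win_split[of "- int n" 0 "- int n" X \<omega> \<omega>'] by (simp add: win_single)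
  have nn: "0 \<le> cE M b U ?x ?P" by (rule cE_nonneg[OF sfU sfX sfW])
  have e1: "Ent M b (\<lambda>\<omega>. (?x \<omega>, ?P \<omega>)) = Ent M b ?P'"
    by (rule Ent_relabel) (use sfX sfW split in auto)
  have e2: "Ent M b (\<lambda>\<omega>. (U \<omega>, ?x \<omega>, ?P \<omega>)) = Ent M b (\<lambda>\<omega>. (U \<omega>, ?P' \<omega>))"
    by (rule Ent_relabel) (use sfU sfX sfW split in auto)
  show ?thesis using nn unfolding cE_def e1 e2 by simp
qed

theorem mainTheorem11:
  fixes M :: "'w measure" and b :: real
    and X :: "int \<Rightarrow> 'w \<Rightarrow> 'x::finite" and R :: "int \<Rightarrow> 'w \<Rightarrow> 'r::finite"
    and k :: nat
  assumes "information_space M b"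
    and "\<And>t. X t \<in> measurable M (count_space UNIV)"
    and "\<And>t. R t \<in> measurable M (count_space UNIV)"
    and "jointly_stationary M X R"
    and "generator M X R"
    and "k \<ge> 1"
  shows "Ent M b (\<lambda>\<omega>. (R (int k) \<omega>, win X 1 (int k) \<omega>)) - Ent M b (\<lambda>\<omega>. (R 0 \<omega>, win X 1 (int k) \<omega>))
           = MI M b (R 0) (win X 1 (int k)) - MI M b (R (int k)) (win X 1 (int k))
       \<and> MI M b (R 0) (win X 1 (int k)) - MI M b (R (int k)) (win X 1 (int k))
           = zeta M b X R k - past_R0_given_future_Rk M b X R k"
proof -
  interpret information_space M b by fact
  note mX = assms(2) and mR = assms(3) and js = assms(4) and gen = assms(5) and k1 = assms(6)
  have sfX: "\<And>t. simple_function M (X t)" using mX by (rule sf_fin)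
  have sfR: "\<And>t. simple_function M (R t)" using mR by (rule sf_fin)
  have sfW: "simple_function M (win X a c)" for a c
  proof -
    have "win X a c = (\<lambda>\<omega>. map (\<lambda>t. X t \<omega>) [a..c])" by (simp add: fun_eq_iff win_def)
    then show ?thesis using sf_map[of M X, OF sfX] by simp
  qed
  have sfWR: "simple_function M (win R a c)" for a c
  proof -
    have "win R a c = (\<lambda>\<omega>. map (\<lambda>t. R t \<omega>) [a..c])" by (simp add: fun_eq_iff win_def)
    then show ?thesis using sf_map[of M R, OF sfR] by simp
  qed
  note sfs = sfX sfR sfW sfWR
  let ?Xk = "win X 1 (int k)" and ?R0 = "R 0" and ?Rk = "R (int k)"
  have S1: "Ent M b ?R0 = Ent M b ?Rk"
    using stat[OF js mX mR, of "\<lambda>l. snd (last l)" 0 0 "int k"] by (simp add: eta_contract_eq)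
  have MI0: "MI M b ?R0 ?Xk = Ent M b ?R0 + Ent M b ?Xk - Ent M b (\<lambda>\<omega>. (?R0 \<omega>, ?Xk \<omega>))"
    by (rule MI_ent) (use sfs in auto)
  have MIk: "MI M b ?Rk ?Xk = Ent M b ?Rk + Ent M b ?Xk - Ent M b (\<lambda>\<omega>. (?Rk \<omega>, ?Xk \<omega>))"
    by (rule MI_ent) (use sfs in auto)
  have part1: "Ent M b (\<lambda>\<omega>. (R (int k) \<omega>, win X 1 (int k) \<omega>)) - Ent M b (\<lambda>\<omega>. (R 0 \<omega>, win X 1 (int k) \<omega>))
           = MI M b (R 0) (win X 1 (int k)) - MI M b (R (int k)) (win X 1 (int k))"
    using MI0 MIk S1 by simp
  define d where "d n = Ent M b (\<lambda>\<omega>. (R 0 \<omega>, win X (1 - int n) 0 \<omega>)) - Ent M b (win X (1 - int n) 0)" for n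
  define z where "z n = CMI M b (win X 1 (int k)) (R 0) (win X (1 - int n) 0)" for n
  define T where "T = MI M b ?R0 ?Xk - MI M b ?Rk ?Xk"
  define Q where "Q = (\<lambda>(n::nat, m::nat). CMI M b (win X (1 - int n) 0) (R 0) (\<lambda>\<omega>. (win X 1 (int m) \<omega>, R (int k) \<omega>)))"
  have d_nn: "0 \<le> d n" for n
  proof -
    have "0 \<le> cE M b ?R0 ?R0 (win X (1 - int n) 0)" by (rule cE_nonneg) (use sfs in auto)
    moreover have "Ent M b (\<lambda>\<omega>. (R 0 \<omega>, R 0 \<omega>, win X (1 - int n) 0 \<omega>)) = Ent M b (\<lambda>\<omega>. (R 0 \<omega>, win X (1 - int n) 0 \<omega>))"
      by (rule Ent_relabel) (use sfs in auto)
    ultimately show ?thesis unfolding cE_def d_def by simp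
  qed
  have d_mono: "d (Suc n) \<le> d n" for n
    using cond_mono[of "R 0" X n, OF sfR sfW sfX] unfolding d_def by simp
  have M3: "cE M b (win X (1 - int n) 0) (\<lambda>\<omega>. (?Xk \<omega>, ?Rk \<omega>)) ?R0 = 0" for n
  proof -
    let ?A = "\<lambda>\<omega>. (win X (0 - int n) 0 \<omega>, win R (0 - int n) (0 - 1) \<omega>)"
    let ?B = "\<lambda>\<omega>. (win X (0 + 1) (0 + int k) \<omega>, win R (0 + 1) (0 + int k) \<omega>)"
    have ci: "cond_indep M ?A ?B (R 0)"
      using gen unfolding generator_def by blast
    have sA: "simple_function M ?A" and sB: "simple_function M ?B" using sfs by auto
    have z0: "cE M b ?A ?B (R 0) = 0"
      unfolding cE_def by (rule CI_ent[OF sA sB sfR ci])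
    show ?thesis
    proof (rule cE_zero[OF sA _ sB _ sfR _ _ z0])
      show "simple_function M (win X (1 - int n) 0)" by (rule sfW)
      show "simple_function M (\<lambda>\<omega>. (?Xk \<omega>, ?Rk \<omega>))" using sfs by auto
      fix \<omega> \<omega>' assume "\<omega> \<in> space M" "\<omega>' \<in> space M"
      { assume "?A \<omega> = ?A \<omega>'"
        then show "win X (1 - int n) 0 \<omega> = win X (1 - int n) 0 \<omega>'"
          by (auto intro: win_sub[of "- int n" "1 - int n" 0 0]) }
      { assume h: "?B \<omega> = ?B \<omega>'"
        then show "(?Xk \<omega>, ?Rk \<omega>) = (?Xk \<omega>', ?Rk \<omega>')"
          using k1 by (auto intro: win_pt[of 1 "int k" "int k" R])}
    qed
  qed
  have M1: "cE M b (win X (1 - int n) 0) ?Xk ?R0 = 0" for n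
    by (rule cE_zero[OF sfW sfW _ sfW sfR _ _ M3[of n]]) (use sfs in auto)
  have Gk: "cE M b (\<lambda>\<omega>. (win X (1 - int n) 0 \<omega>, ?Xk \<omega>)) (win X (int k + 1) (int m)) ?Rk = 0
          \<and> cE M b (\<lambda>\<omega>. (R 0 \<omega>, ?Xk \<omega>)) (win X (int k + 1) (int m)) ?Rk = 0
          \<and> cE M b (\<lambda>\<omega>. (win X (1 - int n) 0 \<omega>, R 0 \<omega>, ?Xk \<omega>)) (win X (int k + 1) (int m)) ?Rk = 0
          \<and> cE M b ?Xk (win X (int k + 1) (int m)) ?Rk = 0" if km: "k \<le> m" for n m
  proof -
    let ?A = "\<lambda>\<omega>. (win X (int k - int (n + k)) (int k) \<omega>, win R (int k - int (n + k)) (int k - 1) \<omega>)"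
    let ?B = "\<lambda>\<omega>. (win X (int k + 1) (int k + int (m - k)) \<omega>, win R (int k + 1) (int k + int (m - k)) \<omega>)"
    let ?W = "win X (int k + 1) (int m)"
    have ci: "cond_indep M ?A ?B ?Rk"
      using gen unfolding generator_def by blast
    have sA: "simple_function M ?A" and sB: "simple_function M ?B" using sfs by auto
    have z0: "cE M b ?A ?B ?Rk = 0"
      unfolding cE_def by (rule CI_ent[OF sA sB sfR ci])
    have km': "int k + int (m - k) = int m" using km by simp
    have dB: "?W \<omega> = ?W \<omega>'" if "?B \<omega> = ?B \<omega>'" for \<omega> \<omega>'
      using that unfolding km' by simp
    have dP: "win X (1 - int n) 0 \<omega> = win X (1 - int n) 0 \<omega>'" if "?A \<omega> = ?A \<omega>'" for \<omega> \<omega>'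
      using that by (auto intro: win_sub[of "int k - int (n + k)" "1 - int n" 0 "int k"])
    have dX: "?Xk \<omega> = ?Xk \<omega>'" if "?A \<omega> = ?A \<omega>'" for \<omega> \<omega>'
      using that by (auto intro: win_sub[of "int k - int (n + k)" 1 "int k" "int k"])
    have dR: "R 0 \<omega> = R 0 \<omega>'" if "?A \<omega> = ?A \<omega>'" for \<omega> \<omega>'
      using that k1 by (auto intro: win_pt[of "int k - int (n + k)" 0 "int k - 1" R])
    have sW: "simple_function M ?W" by (rule sfW)
    have "cE M b (\<lambda>\<omega>. (win X (1 - int n) 0 \<omega>, ?Xk \<omega>)) ?W ?Rk = 0"
      proof (rule cE_zero[OF sA _ sB sW sfR _ _ z0])
        show "simple_function M (\<lambda>\<omega>. (win X (1 - int n) 0 \<omega>, ?Xk \<omega>))" using sfs by auto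
        fix \<omega> \<omega>' assume "\<omega> \<in> space M" "\<omega>' \<in> space M"
        { assume h: "?A \<omega> = ?A \<omega>'" then show "(\<lambda>\<omega>. (win X (1 - int n) 0 \<omega>, ?Xk \<omega>)) \<omega> = (\<lambda>\<omega>. (win X (1 - int n) 0 \<omega>, ?Xk \<omega>)) \<omega>'" using dP[OF h] dX[OF h] by simp }
        { assume h: "?B \<omega> = ?B \<omega>'" then show "?W \<omega> = ?W \<omega>'" by (rule dB) }
      qed
    moreover have "cE M b (\<lambda>\<omega>. (R 0 \<omega>, ?Xk \<omega>)) ?W ?Rk = 0"
      proof (rule cE_zero[OF sA _ sB sW sfR _ _ z0])
        show "simple_function M (\<lambda>\<omega>. (R 0 \<omega>, ?Xk \<omega>))" using sfs by auto
        fix \<omega> \<omega>' assume "\<omega> \<in> space M" "\<omega>' \<in> space M"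
        { assume h: "?A \<omega> = ?A \<omega>'" then show "(\<lambda>\<omega>. (R 0 \<omega>, ?Xk \<omega>)) \<omega> = (\<lambda>\<omega>. (R 0 \<omega>, ?Xk \<omega>)) \<omega>'" using dR[OF h] dX[OF h] by simp }
        { assume h: "?B \<omega> = ?B \<omega>'" then show "?W \<omega> = ?W \<omega>'" by (rule dB) }
      qed
    moreover have "cE M b (\<lambda>\<omega>. (win X (1 - int n) 0 \<omega>, R 0 \<omega>, ?Xk \<omega>)) ?W ?Rk = 0"
      proof (rule cE_zero[OF sA _ sB sW sfR _ _ z0])
        show "simple_function M (\<lambda>\<omega>. (win X (1 - int n) 0 \<omega>, R 0 \<omega>, ?Xk \<omega>))" using sfs by auto
        fix \<omega> \<omega>' assume "\<omega> \<in> space M" "\<omega>' \<in> space M"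
        { assume h: "?A \<omega> = ?A \<omega>'" then show "(\<lambda>\<omega>. (win X (1 - int n) 0 \<omega>, R 0 \<omega>, ?Xk \<omega>)) \<omega> = (\<lambda>\<omega>. (win X (1 - int n) 0 \<omega>, R 0 \<omega>, ?Xk \<omega>)) \<omega>'" using dP[OF h] dR[OF h] dX[OF h] by simp }
        { assume h: "?B \<omega> = ?B \<omega>'" then show "?W \<omega> = ?W \<omega>'" by (rule dB) }
      qed
    moreover have "cE M b ?Xk ?W ?Rk = 0"
      proof (rule cE_zero[OF sA _ sB sW sfR _ _ z0])
        show "simple_function M (?Xk)" using sfs by auto
        fix \<omega> \<omega>' assume "\<omega> \<in> space M" "\<omega>' \<in> space M"
        { assume h: "?A \<omega> = ?A \<omega>'" then show "(?Xk) \<omega> = (?Xk) \<omega>'" using dX[OF h] by simp }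
        { assume h: "?B \<omega> = ?B \<omega>'" then show "?W \<omega> = ?W \<omega>'" by (rule dB) }
      qed
    ultimately show ?thesis by blast
  qed
  have iden: "Q (n, m) = z n - T - d n + d (n + k)" if km: "k \<le> m" for n m
  proof -
    let ?P = "win X (1 - int n) 0" and ?F = "win X 1 (int m)" and ?W = "win X (int k + 1) (int m)"
    let ?P' = "win X (1 - int (n + k)) 0"
    have Fsplit: "(?F \<omega> = ?F \<omega>') = (?Xk \<omega> = ?Xk \<omega>' \<and> ?W \<omega> = ?W \<omega>')" for \<omega> \<omega>'
      using win_split[of "int k" "int m" 1 X \<omega> \<omega>'] km by simp
    have Wsplit: "(win X (1 - int n) (int k) \<omega> = win X (1 - int n) (int k) \<omega>') = (?P \<omega> = ?P \<omega>' \<and> ?Xk \<omega> = ?Xk \<omega>')" for \<omega> \<omega>'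
      using win_split[of 0 "int k" "1 - int n" X \<omega> \<omega>'] by simp
    have Q1: "Q (n, m) = Ent M b (\<lambda>\<omega>. (?P \<omega>, ?F \<omega>, ?Rk \<omega>)) + Ent M b (\<lambda>\<omega>. (R 0 \<omega>, ?F \<omega>, ?Rk \<omega>))
        - Ent M b (\<lambda>\<omega>. (?P \<omega>, R 0 \<omega>, ?F \<omega>, ?Rk \<omega>)) - Ent M b (\<lambda>\<omega>. (?F \<omega>, ?Rk \<omega>))"
      unfolding Q_def by (simp only: case_prod_conv, rule CMI_ent) (use sfs in auto)
    have z1: "z n = Ent M b (\<lambda>\<omega>. (?Xk \<omega>, ?P \<omega>)) + Ent M b (\<lambda>\<omega>. (R 0 \<omega>, ?P \<omega>))
        - Ent M b (\<lambda>\<omega>. (?Xk \<omega>, R 0 \<omega>, ?P \<omega>)) - Ent M b ?P"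
      unfolding z_def by (rule CMI_ent) (use sfs in auto)
    note G = Gk[OF km, of n, unfolded cE_def]
    note m3 = M3[of n, unfolded cE_def] and m1 = M1[of n, unfolded cE_def]
    have rq1: "Ent M b (\<lambda>\<omega>. (?P \<omega>, ?F \<omega>, ?Rk \<omega>)) = Ent M b (\<lambda>\<omega>. ((?P \<omega>, ?Xk \<omega>), ?W \<omega>, ?Rk \<omega>))"
      by (rule Ent_relabel) (use sfs Fsplit in auto)
    have rq2: "Ent M b (\<lambda>\<omega>. (R 0 \<omega>, ?F \<omega>, ?Rk \<omega>)) = Ent M b (\<lambda>\<omega>. ((R 0 \<omega>, ?Xk \<omega>), ?W \<omega>, ?Rk \<omega>))"
      by (rule Ent_relabel) (use sfs Fsplit in auto)
    have rq3: "Ent M b (\<lambda>\<omega>. (?P \<omega>, R 0 \<omega>, ?F \<omega>, ?Rk \<omega>)) = Ent M b (\<lambda>\<omega>. ((?P \<omega>, R 0 \<omega>, ?Xk \<omega>), ?W \<omega>, ?Rk \<omega>))"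
      by (rule Ent_relabel) (use sfs Fsplit in auto)
    have rq4: "Ent M b (\<lambda>\<omega>. (?F \<omega>, ?Rk \<omega>)) = Ent M b (\<lambda>\<omega>. (?Xk \<omega>, ?W \<omega>, ?Rk \<omega>))"
      by (rule Ent_relabel) (use sfs Fsplit in auto)
    have rm1: "Ent M b (\<lambda>\<omega>. (?P \<omega>, (?Xk \<omega>, ?Rk \<omega>), R 0 \<omega>)) = Ent M b (\<lambda>\<omega>. ((?P \<omega>, R 0 \<omega>, ?Xk \<omega>), ?Rk \<omega>))"
      by (rule Ent_relabel) (use sfs in auto)
    have rm2: "Ent M b (\<lambda>\<omega>. ((?Xk \<omega>, ?Rk \<omega>), R 0 \<omega>)) = Ent M b (\<lambda>\<omega>. ((R 0 \<omega>, ?Xk \<omega>), ?Rk \<omega>))"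
      by (rule Ent_relabel) (use sfs in auto)
    have rz1: "Ent M b (\<lambda>\<omega>. (?P \<omega>, R 0 \<omega>)) = Ent M b (\<lambda>\<omega>. (R 0 \<omega>, ?P \<omega>))"
      by (rule Ent_relabel) (use sfs in auto)
    have rz2: "Ent M b (\<lambda>\<omega>. (?Xk \<omega>, R 0 \<omega>)) = Ent M b (\<lambda>\<omega>. (R 0 \<omega>, ?Xk \<omega>))"
      by (rule Ent_relabel) (use sfs in auto)
    have rz3: "Ent M b (\<lambda>\<omega>. (?P \<omega>, ?Xk \<omega>, R 0 \<omega>)) = Ent M b (\<lambda>\<omega>. (?Xk \<omega>, R 0 \<omega>, ?P \<omega>))"
      by (rule Ent_relabel) (use sfs in auto)
    have rk: "Ent M b (\<lambda>\<omega>. (?Xk \<omega>, ?Rk \<omega>)) = Ent M b (\<lambda>\<omega>. (?Rk \<omega>, ?Xk \<omega>))"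
      by (rule Ent_relabel) (use sfs in auto)
    have st1: "Ent M b (\<lambda>\<omega>. (R 0 \<omega>, ?P' \<omega>)) = Ent M b (\<lambda>\<omega>. (?Rk \<omega>, win X (1 - int n) (int k) \<omega>))"
    proof -
      have le: "1 - int (n + k) \<le> 0" and le2: "1 - int n \<le> int k" using k1 by simp_all
      show ?thesis
        using stat[OF js mX mR, of "\<lambda>l. (snd (last l), map fst l)" "1 - int (n + k)" 0 "int k"] le le2
        by (simp add: last_map_upto win_def o_def)
    qed
    have st2: "Ent M b ?P' = Ent M b (win X (1 - int n) (int k))"
      using stat[OF js mX mR, of "\<lambda>l. map fst l" "1 - int (n + k)" 0 "int k"]
      by (simp add: win_def[abs_def] o_def)
    have rs1: "Ent M b (\<lambda>\<omega>. (?Rk \<omega>, win X (1 - int n) (int k) \<omega>)) = Ent M b (\<lambda>\<omega>. ((?P \<omega>, ?Xk \<omega>), ?Rk \<omega>))"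
      by (rule Ent_relabel) (use sfs Wsplit in auto)
    have rs2: "Ent M b (win X (1 - int n) (int k)) = Ent M b (\<lambda>\<omega>. (?Xk \<omega>, ?P \<omega>))"
      by (rule Ent_relabel) (use sfs Wsplit in auto)
    show ?thesis
      unfolding Q1 z1 d_def T_def MI0 MIk
      using G m3 m1 rq1 rq2 rq3 rq4 rm1 rm2 rz1 rz2 rz3 rk st1 st2 rs1 rs2 S1 by linarith
  qed
  have zf: "z n = (Ent M b (\<lambda>\<omega>. (?Xk \<omega>, win X (1 - int n) 0 \<omega>)) - Ent M b (win X (1 - int n) 0))
      - Ent M b (\<lambda>\<omega>. (R 0 \<omega>, ?Xk \<omega>)) + Ent M b ?R0" for n
  proof -
    let ?P = "win X (1 - int n) 0"
    have z1: "z n = Ent M b (\<lambda>\<omega>. (?Xk \<omega>, ?P \<omega>)) + Ent M b (\<lambda>\<omega>. (R 0 \<omega>, ?P \<omega>))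
        - Ent M b (\<lambda>\<omega>. (?Xk \<omega>, R 0 \<omega>, ?P \<omega>)) - Ent M b ?P"
      unfolding z_def by (rule CMI_ent) (use sfs in auto)
    note m1 = M1[of n, unfolded cE_def]
    have rz1: "Ent M b (\<lambda>\<omega>. (?P \<omega>, R 0 \<omega>)) = Ent M b (\<lambda>\<omega>. (R 0 \<omega>, ?P \<omega>))"
      by (rule Ent_relabel) (use sfs in auto)
    have rz2: "Ent M b (\<lambda>\<omega>. (?Xk \<omega>, R 0 \<omega>)) = Ent M b (\<lambda>\<omega>. (R 0 \<omega>, ?Xk \<omega>))"
      by (rule Ent_relabel) (use sfs in auto)
    have rz3: "Ent M b (\<lambda>\<omega>. (?P \<omega>, ?Xk \<omega>, R 0 \<omega>)) = Ent M b (\<lambda>\<omega>. (?Xk \<omega>, R 0 \<omega>, ?P \<omega>))"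
      by (rule Ent_relabel) (use sfs in auto)
    show ?thesis using z1 m1 rz1 rz2 rz3 by linarith
  qed
  have z_nn: "0 \<le> z n" for n
    using cE_nonneg[of ?Xk ?R0 "win X (1 - int n) 0", OF sfW sfR sfW] CMI_ent[OF sfW sfR sfW]
    unfolding z_def cE_def by simp
  have z_mono: "z (Suc n) \<le> z n" for n
    using cond_mono[of ?Xk X n, OF sfW sfW sfX] unfolding zf by simp
  obtain Ld where Ld: "d \<longlonglongrightarrow> Ld"
    using decseq_convergent[OF decseq_SucI[of d, OF d_mono], of 0] d_nn by blast
  obtain Lz where Lz: "z \<longlonglongrightarrow> Lz"
    using decseq_convergent[OF decseq_SucI[of z, OF z_mono], of 0] z_nn by blast
  have q: "(\<lambda>n. z n - T - d n + d (n + k)) \<longlonglongrightarrow> Lz - T"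
  proof -
    have "(\<lambda>n. z n - T - d n + d (n + k)) \<longlonglongrightarrow> Lz - T - Ld + Ld"
      by (intro tendsto_intros Lz Ld LIMSEQ_ignore_initial_segment[OF Ld])
    then show ?thesis by simp
  qed
  have zeta: "zeta M b X R k = Lz"
  proof -
    have "z = (\<lambda>n. CMI M b (win X 1 (int k)) (R 0) (win X (1 - int n) 0))" by (rule ext) (simp add: z_def)
    then have "zeta M b X R k = lim z" unfolding zeta_def by simp
    then show ?thesis using limI[OF Lz] by simp
  qed
  have QL: "(Q \<longlongrightarrow> Lz - T) (sequentially \<times>\<^sub>F sequentially)"
  proof -
    have ev: "eventually (\<lambda>p. (\<lambda>p. z (fst p) - T - d (fst p) + d (fst p + k)) p = Q p) (sequentially \<times>\<^sub>F sequentially)"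
      unfolding eventually_prod_sequentially
      by (rule exI[of _ k]) (auto simp: iden)
    have "((\<lambda>p. z (fst p) - T - d (fst p) + d (fst p + k)) \<longlongrightarrow> Lz - T) (sequentially \<times>\<^sub>F sequentially)"
      using filterlim_compose[OF q filterlim_fst] .
    then show ?thesis using tendsto_cong[OF ev] by simp
  qed
  have past: "past_R0_given_future_Rk M b X R k = Lz - T"
  proof -
    have "past_R0_given_future_Rk M b X R k = Lim (sequentially \<times>\<^sub>F sequentially) Q"
      unfolding past_R0_given_future_Rk_def Q_def ..
    also have "\<dots> = Lz - T"
      by (rule tendsto_Lim[OF _ QL]) (auto simp: trivial_limit_def eventually_prod_sequentially)
    finally show ?thesis .
  qed
  show ?thesis using part1 zeta past unfolding T_def by simp
qed

end
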